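(* Let $k\ge 0$ and $n>3k$ be integers. Then the set of maximal simplices of $\mathrm{VR}(T_{n,n};k)$ equals $M_{n,k}=\{\pi_n(\sigma):\sigma \text{ a maximal simplex of } \mathrm{VR}(\mathbb{Z}^2;k)\}$.
   Context: $\mathbb{Z}^2$ carries the $l^1$ metric. $T_{n,n}=\mathbb{Z}^2/(n\mathbb{Z}\times n\mathbb{Z})$ with quotient map $\pi_n$ (reduction mod $n$) and quotient metric $d([x],[y])=\min\{d(x',y'):\pi_n(x')=[x],\pi_n(y')=[y]\}$. $\mathrm{VR}(X;r)$ is the simplicial complex on $X$ whose simplices are the finite nonempty subsets of diameter at most $r$; a maximal simplex is one not properly contained in another. *)

theory Defs
  imports Main
begin

definition l1_dist :: "int \<times> int \<Rightarrow> int \<times> int \<Rightarrow> nat" where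
  "l1_dist x y = nat (\<bar>fst x - fst y\<bar> + \<bar>snd x - snd y\<bar>)"

text \<open>The torus T_{n,n} = Z^2/(nZ x nZ), represented by canonical residues.\<close>
definition torus :: "nat \<Rightarrow> (int \<times> int) set" where
  "torus n = {0..<int n} \<times> {0..<int n}"

definition proj :: "nat \<Rightarrow> int \<times> int \<Rightarrow> int \<times> int" where
  "proj n x = (fst x mod int n, snd x mod int n)"

definition torus_dist :: "nat \<Rightarrow> int \<times> int \<Rightarrow> int \<times> int \<Rightarrow> nat" where
  "torus_dist n p q =
     (LEAST d. \<exists>x' y'. proj n x' = p \<and> proj n y' = q \<and> l1_dist x' y' = d)"

definition vr_simplex :: "'a set \<Rightarrow> ('a \<Rightarrow> 'a \<Rightarrow> nat) \<Rightarrow> nat \<Rightarrow> 'a set \<Rightarrow> bool" where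
  "vr_simplex X d r \<sigma> \<longleftrightarrow>
     \<sigma> \<subseteq> X \<and> finite \<sigma> \<and> \<sigma> \<noteq> {} \<and> (\<forall>x\<in>\<sigma>. \<forall>y\<in>\<sigma>. d x y \<le> r)"

definition vr_maximal_simplex :: "'a set \<Rightarrow> ('a \<Rightarrow> 'a \<Rightarrow> nat) \<Rightarrow> nat \<Rightarrow> 'a set \<Rightarrow> bool" where
  "vr_maximal_simplex X d r \<sigma> \<longleftrightarrow>
     vr_simplex X d r \<sigma> \<and> \<not> (\<exists>\<tau>. vr_simplex X d r \<tau> \<and> \<sigma> \<subset> \<tau>)"

end

theory Submission
  imports Defs
begin

lemma l1_sym: "l1_dist x y = l1_dist y x"
  unfolding l1_dist_def by (simp add: abs_minus_commute)

lemma l1_tri: "l1_dist x z \<le> l1_dist x y + l1_dist y z"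
  unfolding l1_dist_def by (simp add: nat_le_iff)

lemma l1_self: "l1_dist x x = 0"
  unfolding l1_dist_def by simp

lemma proj_eq_iff:
  "proj n a = proj n b \<longleftrightarrow> int n dvd fst a - fst b \<and> int n dvd snd a - snd b"
  unfolding proj_def by (simp add: mod_eq_dvd_iff)

lemma proj_torus: "p \<in> torus n \<Longrightarrow> proj n p = p"
  unfolding proj_def torus_def by (cases p) auto

lemma proj_in_torus: "n > 0 \<Longrightarrow> proj n x \<in> torus n"
  unfolding proj_def torus_def by auto

lemma lift_unique:
  assumes "proj n a = proj n b" "l1_dist a b < n"
  shows "a = b"
proof -
  have d1: "int n dvd fst a - fst b" and d2: "int n dvd snd a - snd b"
    using assms(1) proj_eq_iff by blast+
  have lt: "\<bar>fst a - fst b\<bar> + \<bar>snd a - snd b\<bar> < int n"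
    using assms(2) unfolding l1_dist_def by simp
  have "fst a - fst b = 0"
  proof (rule ccontr)
    assume "fst a - fst b \<noteq> 0"
    then have "\<bar>int n\<bar> \<le> \<bar>fst a - fst b\<bar>" using dvd_imp_le_int d1 by blast
    then show False using lt by simp
  qed
  moreover have "snd a - snd b = 0"
  proof (rule ccontr)
    assume "snd a - snd b \<noteq> 0"
    then have "\<bar>int n\<bar> \<le> \<bar>snd a - snd b\<bar>" using dvd_imp_le_int d2 by blast
    then show False using lt by simp
  qed
  ultimately show ?thesis by (simp add: prod_eq_iff)
qed

lemma torus_dist_le: "torus_dist n (proj n x) (proj n y) \<le> l1_dist x y"
  unfolding torus_dist_def by (rule Least_le) blast

lemma torus_dist_wit:
  "\<exists>x' y'. proj n x' = proj n x \<and> proj n y' = proj n y \<and> l1_dist x' y' = torus_dist n (proj n x) (proj n y)"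
  unfolding torus_dist_def by (rule LeastI_ex) blast

lemma translate:
  assumes "proj n a = proj n y"
  shows "proj n (fst b + (fst y - fst a), snd b + (snd y - snd a)) = proj n b"
    and "l1_dist y (fst b + (fst y - fst a), snd b + (snd y - snd a)) = l1_dist a b"
proof -
  have d1: "int n dvd fst y - fst a" and d2: "int n dvd snd y - snd a"
    using assms proj_eq_iff by (metis dvd_minus_iff minus_diff_eq)+
  show "proj n (fst b + (fst y - fst a), snd b + (snd y - snd a)) = proj n b"
    unfolding proj_eq_iff using d1 d2 by simp
  show "l1_dist y (fst b + (fst y - fst a), snd b + (snd y - snd a)) = l1_dist a b"
    unfolding l1_dist_def by (simp add: abs_minus_commute)
qed

lemma lift_near:
  assumes "torus_dist n (proj n x0) q \<le> k" "q \<in> torus n"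
  shows "\<exists>y. proj n y = q \<and> l1_dist x0 y \<le> k"
proof -
  obtain a b where ab: "proj n a = proj n x0" "proj n b = proj n q"
    "l1_dist a b = torus_dist n (proj n x0) (proj n q)"
    using torus_dist_wit by blast
  let ?w = "(fst b + (fst x0 - fst a), snd b + (snd x0 - snd a))"
  have "proj n ?w = q" using translate(1)[OF ab(1)] ab(2) proj_torus[OF assms(2)] by simp
  moreover have "l1_dist x0 ?w \<le> k" using translate(2)[OF ab(1), of b] ab(3) assms
      proj_torus[OF assms(2)] by simp
  ultimately show ?thesis by blast
qed

lemma diam_lemma:
  assumes "n > 3 * k" "torus_dist n (proj n y) (proj n z) \<le> k" "l1_dist y z \<le> 2 * k"
  shows "l1_dist y z \<le> k"
proof -
  obtain a b where ab: "proj n a = proj n y" "proj n b = proj n z"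
    "l1_dist a b = torus_dist n (proj n y) (proj n z)"
    using torus_dist_wit by blast
  let ?w = "(fst b + (fst y - fst a), snd b + (snd y - snd a))"
  have pw: "proj n ?w = proj n z" using translate(1)[OF ab(1)] ab(2) by simp
  have lw: "l1_dist y ?w \<le> k" using translate(2)[OF ab(1), of b] ab(3) assms by simp
  have "l1_dist z ?w \<le> l1_dist z y + l1_dist y ?w" by (rule l1_tri)
  also have "\<dots> < n" using lw assms l1_sym[of z y] by simp
  finally have "z = ?w" using lift_unique[of n z ?w] pw by simp
  then show ?thesis using lw by simp
qed

lemma box_finite: "finite {y. l1_dist x0 y \<le> k}"
proof -
  have "{y. l1_dist x0 y \<le> k} \<subseteq> {fst x0 - int k..fst x0 + int k} \<times> {snd x0 - int k..snd x0 + int k}"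
    unfolding l1_dist_def by (auto simp: nat_le_iff)
  then show ?thesis by (rule finite_subset) simp
qed

context
  fixes n k :: nat
  assumes nk: "n > 3 * k"
begin

definition liftset :: "(int \<times> int) set \<Rightarrow> int \<times> int \<Rightarrow> (int \<times> int) set" where
  "liftset S x0 = {y. proj n y \<in> S \<and> l1_dist x0 y \<le> k}"

lemma liftset_simplex:
  assumes S: "vr_simplex (torus n) (torus_dist n) k S" and x0: "proj n x0 \<in> S"
  shows "vr_simplex UNIV l1_dist k (liftset S x0)" "proj n ` liftset S x0 = S"
proof -
  have fin: "finite (liftset S x0)"
    unfolding liftset_def by (rule finite_subset[OF _ box_finite[of x0 k]]) auto
  have img: "proj n ` liftset S x0 = S"
  proof
    show "proj n ` liftset S x0 \<subseteq> S" unfolding liftset_def by auto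
    show "S \<subseteq> proj n ` liftset S x0"
    proof
      fix q assume q: "q \<in> S"
      have "torus_dist n (proj n x0) q \<le> k" using S x0 q unfolding vr_simplex_def by blast
      moreover have "q \<in> torus n" using S q unfolding vr_simplex_def by blast
      ultimately obtain y where "proj n y = q" "l1_dist x0 y \<le> k" using lift_near by blast
      then show "q \<in> proj n ` liftset S x0" unfolding liftset_def using q by force
    qed
  qed
  have diam: "\<forall>y\<in>liftset S x0. \<forall>z\<in>liftset S x0. l1_dist y z \<le> k"
  proof (intro ballI)
    fix y z assume y: "y \<in> liftset S x0" and z: "z \<in> liftset S x0"
    have "torus_dist n (proj n y) (proj n z) \<le> k"
      using y z S unfolding liftset_def vr_simplex_def by blast
    moreover have "l1_dist y z \<le> 2 * k"
    proof -
      have "l1_dist y z \<le> l1_dist y x0 + l1_dist x0 z" by (rule l1_tri)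
      moreover have "l1_dist y x0 = l1_dist x0 y" by (rule l1_sym)
      moreover have "l1_dist x0 y \<le> k" "l1_dist x0 z \<le> k" using y z unfolding liftset_def by auto
      ultimately show ?thesis by linarith
    qed
    ultimately show "l1_dist y z \<le> k" using diam_lemma nk by blast
  qed
  have "liftset S x0 \<noteq> {}" using img S unfolding vr_simplex_def by auto
  then show "vr_simplex UNIV l1_dist k (liftset S x0)" unfolding vr_simplex_def using fin diam by blast
  show "proj n ` liftset S x0 = S" by (rule img)
qed

lemma proj_simplex:
  assumes "vr_simplex UNIV l1_dist k \<tau>"
  shows "vr_simplex (torus n) (torus_dist n) k (proj n ` \<tau>)"
proof -
  have fin: "finite \<tau>" "\<tau> \<noteq> {}" and d: "\<forall>x\<in>\<tau>. \<forall>y\<in>\<tau>. l1_dist x y \<le> k"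
    using assms unfolding vr_simplex_def by auto
  have "proj n ` \<tau> \<subseteq> torus n" using proj_in_torus[of n] nk by auto
  moreover have "\<forall>p\<in>proj n ` \<tau>. \<forall>q\<in>proj n ` \<tau>. torus_dist n p q \<le> k"
  proof (intro ballI)
    fix p q assume "p \<in> proj n ` \<tau>" "q \<in> proj n ` \<tau>"
    then obtain x y where "x \<in> \<tau>" "y \<in> \<tau>" "p = proj n x" "q = proj n y" by blast
    then show "torus_dist n p q \<le> k" using d torus_dist_le[of n x y] by fastforce
  qed
  ultimately show ?thesis using fin unfolding vr_simplex_def by blast
qed

lemma extend_max:
  assumes "vr_simplex UNIV l1_dist k \<sigma>"
  shows "\<exists>\<tau>. \<sigma> \<subseteq> \<tau> \<and> vr_maximal_simplex UNIV l1_dist k \<tau>"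
proof -
  obtain x0 where x0: "x0 \<in> \<sigma>" using assms unfolding vr_simplex_def by blast
  let ?F = "{\<tau>. vr_simplex UNIV l1_dist k \<tau> \<and> \<sigma> \<subseteq> \<tau>}"
  have "?F \<subseteq> Pow {y. l1_dist x0 y \<le> k}"
    using x0 unfolding vr_simplex_def by blast
  moreover have "finite (Pow {y. l1_dist x0 y \<le> k})" using box_finite by simp
  ultimately have "finite ?F" by (rule finite_subset)
  moreover have "\<sigma> \<in> ?F" using assms by simp
  ultimately obtain m where m: "m \<in> ?F" "\<sigma> \<subseteq> m" "\<forall>b\<in>?F. m \<le> b \<longrightarrow> m = b"
    using finite_has_maximal2[of ?F \<sigma>] by auto
  have "vr_maximal_simplex UNIV l1_dist k m"
    unfolding vr_maximal_simplex_def using m(1,3) by auto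
  then show ?thesis using m by blast
qed

end

theorem lemma5p6:
  fixes n k :: nat
  assumes "n > 3 * k"
  shows "{\<sigma>. vr_maximal_simplex (torus n) (torus_dist n) k \<sigma>} =
         {proj n ` \<sigma> | \<sigma>. vr_maximal_simplex UNIV l1_dist k \<sigma>}"
proof (intro set_eqI iffI)
  fix S assume "S \<in> {\<sigma>. vr_maximal_simplex (torus n) (torus_dist n) k \<sigma>}"
  then have Sm: "vr_maximal_simplex (torus n) (torus_dist n) k S" by simp
  then have S: "vr_simplex (torus n) (torus_dist n) k S" unfolding vr_maximal_simplex_def by blast
  then obtain p0 where p0: "p0 \<in> S" unfolding vr_simplex_def by blast
  have pp: "proj n p0 = p0" using p0 S proj_torus unfolding vr_simplex_def by blast
  have L: "vr_simplex UNIV l1_dist k (liftset n k S p0)" "proj n ` liftset n k S p0 = S"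
    using liftset_simplex[OF assms S] pp p0 by auto
  obtain \<tau> where t: "liftset n k S p0 \<subseteq> \<tau>" "vr_maximal_simplex UNIV l1_dist k \<tau>"
    using extend_max[OF assms L(1)] by blast
  have "vr_simplex (torus n) (torus_dist n) k (proj n ` \<tau>)"
    using proj_simplex[OF assms] t(2) unfolding vr_maximal_simplex_def by blast
  moreover have "S \<subseteq> proj n ` \<tau>" using L(2) t(1) by blast
  ultimately have "S = proj n ` \<tau>" using Sm unfolding vr_maximal_simplex_def psubset_eq by metis
  then show "S \<in> {proj n ` \<sigma> | \<sigma>. vr_maximal_simplex UNIV l1_dist k \<sigma>}" using t(2) by blast
next
  fix S assume "S \<in> {proj n ` \<sigma> | \<sigma>. vr_maximal_simplex UNIV l1_dist k \<sigma>}"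
  then obtain \<tau> where St: "S = proj n ` \<tau>" and tm: "vr_maximal_simplex UNIV l1_dist k \<tau>" by blast
  have t: "vr_simplex UNIV l1_dist k \<tau>" using tm unfolding vr_maximal_simplex_def by blast
  have S: "vr_simplex (torus n) (torus_dist n) k S" using proj_simplex[OF assms t] St by simp
  have "\<not> (\<exists>S'. vr_simplex (torus n) (torus_dist n) k S' \<and> S \<subset> S')"
  proof
    assume "\<exists>S'. vr_simplex (torus n) (torus_dist n) k S' \<and> S \<subset> S'"
    then obtain S' where S': "vr_simplex (torus n) (torus_dist n) k S'" "S \<subset> S'" by blast
    obtain x0 where x0: "x0 \<in> \<tau>" using t unfolding vr_simplex_def by blast
    have px: "proj n x0 \<in> S'" using x0 St S'(2) by blast
    have L: "vr_simplex UNIV l1_dist k (liftset n k S' x0)" "proj n ` liftset n k S' x0 = S'"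
      using liftset_simplex[OF assms S'(1) px] by auto
    have sub: "\<tau> \<subseteq> liftset n k S' x0"
    proof
      fix y assume y: "y \<in> \<tau>"
      have "proj n y \<in> S'" using y St S'(2) by blast
      moreover have "l1_dist x0 y \<le> k" using t x0 y unfolding vr_simplex_def by blast
      ultimately show "y \<in> liftset n k S' x0" unfolding liftset_def[OF assms] by simp
    qed
    have "\<tau> \<noteq> liftset n k S' x0" using L(2) St S'(2) by blast
    then have "\<tau> \<subset> liftset n k S' x0" using sub by blast
    then show False using tm L(1) unfolding vr_maximal_simplex_def by auto
  qed
  then show "S \<in> {\<sigma>. vr_maximal_simplex (torus n) (torus_dist n) k \<sigma>}"
    using S unfolding vr_maximal_simplex_def by simp
qed

end
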